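(* Fix one of the two variants $\sharp\in\{\text{lumped},\text{exact}\}$ described in the context. Let $\vec X^m\in\underline V^h_{\partial_0}$ satisfy assumption $(\mathfrak A)$, let $\Delta t_m>0$, and let $(\delta\vec X^{m+1},\kappa^{m+1})\in\underline V^h_\partial\times W_\sharp$ satisfy, with $\vec X^{m+1}=\vec X^m+\delta\vec X^{m+1}$, $$\Big(\vec X^m\cdot\vec e_1\,\tfrac{\vec X^{m+1}-\vec X^m}{\Delta t_m},\chi\,\vec\nu^m|\vec X^m_\rho|\Big)_\sharp=\Big(\vec X^m\cdot\vec e_1\,\kappa^{m+1},\chi|\vec X^m_\rho|\Big)_\sharp-\frac{(\vec X^m\cdot\vec e_1,\kappa^{m+1}|\vec X^m_\rho|)_\sharp}{(\vec X^m\cdot\vec e_1,|\vec X^m_\rho|)}\,\big(\vec X^m\cdot\vec e_1,\chi|\vec X^m_\rho|\big)_\sharp\quad\forall\chi\in W_\sharp,$$ $$\Big(\vec X^m\cdot\vec e_1\,\kappa^{m+1}\vec\nu^m,\vec\eta\,|\vec X^m_\rho|\Big)_\sharp+\big(\vec\eta\cdot\vec e_1,|\vec X^{m+1}_\rho|\big)+\Big((\vec X^m\cdot\vec e_1)\vec X^{m+1}_\rho,\vec\eta_\rho|\vec X^m_\rho|^{-1}\Big)=B^m(\vec\eta)\quad\forall\vec\eta\in\underline V^h_\partial.$$ Then $$\tfrac1{2\pi}\big(E(\vec X^m)-E(\vec X^{m+1})\big)\ge\Delta t_m\Big[\big(\vec X^m\cdot\vec e_1\,|\kappa^{m+1}|^2,|\vec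 X^m_\rho|\big)_\sharp-\frac{\big|(\vec X^m\cdot\vec e_1,\kappa^{m+1}|\vec X^m_\rho|)_\sharp\big|^2}{(\vec X^m\cdot\vec e_1,|\vec X^m_\rho|)}\Big]\ge0 .$$
   Context: Setup. $\vec e_1=(1,0)^T$, $\vec e_2=(0,1)^T$; "$\cdot$" is the Euclidean inner product; $[r]_+=\max\{r,0\}$, $[r]_-=-\max\{-r,0\}$. $I$ is either the periodic interval $\mathbb R/\mathbb Z$ (with $\partial I=\emptyset$) or $I=(0,1)$ (with $\partial I=\{0,1\}$). $\partial I=\partial_DI\cup\partial_0I\cup\partial_1I\cup\partial_2I$ is a given disjoint partition, and $\widehat\varrho^{(p)}\in\mathbb R$, $p\in\{0,1\}$, are given constants with $|\widehat\varrho^{(p)}|\le1$. Let $J\ge3$, $h=1/J$, $q_j=jh$ ($j=0,\dots,J$; $q_0=q_J$ identified in the periodic case). $V^h$ is the space of continuous functions on $\overline I$ (periodic if $I=\mathbb R/\mathbb Z$) that are affine on each $[q_{j-1},q_j]$; $\underline V^h=[V^h]^2$; $\underline V^h_{\partial_0}=\{\vec\eta\in\underline V^h:\vec\eta(\rho)\cdot\vec e_1=0\ \forall\rho\in\partial_0I\}$; $\underline V^h_\partial=\{\vec\eta\in\underline V^h_{\partial_0}:\vec\eta(\rho)\cdot\vec e_i=0\ \forall\rho\in\partial_iI,\ i=1,2;\ \vec\eta(\rho)=\vec0\ \forall\rho\in\partial_DI\}$; $W^h_{\partial_0}=\{\chi\in V^h:\chi(\rho)=0\ \forall\rho\in\partial_0I\}$.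 $(\cdot,\cdot)$ is the $L^2(I)$ inner product, and for piecewise continuous $f,g$ the mass-lumped product is $(f,g)^h=\tfrac h2\sum_{j=1}^J[(fg)(q_j^-)+(fg)(q_{j-1}^+)]$. Two variants: "lumped": $(\cdot,\cdot)_\sharp=(\cdot,\cdot)^h$, $W_\sharp=W^h_{\partial_0}$; "exact": $(\cdot,\cdot)_\sharp=(\cdot,\cdot)$, $W_\sharp=V^h$. $\vec\nu^m=-[\vec X^m_\rho]^\perp/|\vec X^m_\rho|$ with $(a,b)^\perp=(b,-a)$. Assumption $(\mathfrak A)$: $|\vec X^m_\rho|>0$ a.e. on $I$ and $\vec X^m(\rho)\cdot\vec e_1>0$ for all $\rho\in\overline I\setminus\partial_0I$. $B^m(\vec\eta)=-\sum_{p\in\partial_1I}\widehat\varrho^{(p)}(\vec X^m(p)\cdot\vec e_1)\vec\eta(p)\cdot\vec e_2-\sum_{p\in\partial_2I}\big(([\widehat\varrho^{(p)}]_+\vec X^{m+1}(p)+[\widehat\varrho^{(p)}]_-\vec X^m(p))\cdot\vec e_1\big)\vec\eta(p)\cdot\vec e_1$. The discrete energy of $\vec X\in\underline V^h$ is $E(\vec X)=2\pi(\vec X\cdot\vec e_1,|\vec X_\rho|)+2\pi\sum_{p\in\partial_1I}\widehat\varrho^{(p)}(\vec X(p)\cdot\vec e_1)(\vec X(p)\cdot\vec e_2)+\pi\sum_{p\in\partial_2I}\widehat\varrho^{(p)}(\vec X(p)\cdot\vec e_1)^2$. *)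

theory Defs
  imports "HOL-Analysis.Analysis"
begin

text \<open>Discrete functions in V^h are represented by their
  nodal values f 0, ..., f J (values at indices > J are irrelevant);
  in the periodic case f J = f 0.  Element-wise quantities are functions
  g j rho for the element [q_(j-1), q_j], j = 1..J.\<close>

type_synonym vec = "real \<times> real"

definition e1 :: vec where "e1 = (1, 0)"
definition e2 :: vec where "e2 = (0, 1)"
definition perp :: "vec \<Rightarrow> vec" where "perp v = (snd v, - fst v)"

definition pos_part :: "real \<Rightarrow> real" where "pos_part r = max r 0"
definition neg_part :: "real \<Rightarrow> real" where "neg_part r = - max (- r) 0"

definition node :: "nat \<Rightarrow> nat \<Rightarrow> real" where "node J j = real j / real J"

definition loc :: "nat \<Rightarrow> (nat \<Rightarrow> 'a::real_vector) \<Rightarrow> nat \<Rightarrow> real \<Rightarrow> 'a" where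
  "loc J f j \<rho> = f (j - 1) + ((\<rho> - node J (j - 1)) * real J) *\<^sub>R (f j - f (j - 1))"

definition dloc :: "nat \<Rightarrow> (nat \<Rightarrow> 'a::real_vector) \<Rightarrow> nat \<Rightarrow> real \<Rightarrow> 'a" where
  "dloc J f j \<rho> = real J *\<^sub>R (f j - f (j - 1))"

definition elem :: "nat \<Rightarrow> real \<Rightarrow> nat" where
  "elem J \<rho> = (if \<rho> \<le> 0 then 1 else min J (nat \<lceil>\<rho> * real J\<rceil>))"

definition fun_of :: "nat \<Rightarrow> (nat \<Rightarrow> 'a::real_vector) \<Rightarrow> real \<Rightarrow> 'a" where
  "fun_of J f \<rho> = loc J f (elem J \<rho>) \<rho>"

definition ipE :: "nat \<Rightarrow> (nat \<Rightarrow> real \<Rightarrow> 'a::real_inner) \<Rightarrow> (nat \<Rightarrow> real \<Rightarrow> 'a) \<Rightarrow> real" where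
  "ipE J f g = (\<Sum>j = 1..J. integral {node J (j - 1) .. node J j} (\<lambda>\<rho>. inner (f j \<rho>) (g j \<rho>)))"

text \<open>Mass-lumped inner product (one-sided limits = element-wise endpoint values).\<close>
definition ipL :: "nat \<Rightarrow> (nat \<Rightarrow> real \<Rightarrow> 'a::real_inner) \<Rightarrow> (nat \<Rightarrow> real \<Rightarrow> 'a) \<Rightarrow> real" where
  "ipL J f g = ((1 / real J) / 2) * (\<Sum>j = 1..J.
      inner (f j (node J j)) (g j (node J j)) + inner (f j (node J (j - 1))) (g j (node J (j - 1))))"

definition ipS :: "bool \<Rightarrow> nat \<Rightarrow> (nat \<Rightarrow> real \<Rightarrow> 'a::real_inner) \<Rightarrow> (nat \<Rightarrow> real \<Rightarrow> 'a) \<Rightarrow> real" where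
  "ipS lumped J f g = (if lumped then ipL J f g else ipE J f g)"

definition boundary_partition :: "bool \<Rightarrow> real set \<Rightarrow> real set \<Rightarrow> real set \<Rightarrow> real set \<Rightarrow> bool" where
  "boundary_partition periodic DD D0 D1 D2 =
     (if periodic then DD = {} \<and> D0 = {} \<and> D1 = {} \<and> D2 = {}
      else DD \<union> D0 \<union> D1 \<union> D2 = {0, 1} \<and> DD \<inter> D0 = {} \<and> DD \<inter> D1 = {} \<and> DD \<inter> D2 = {}
           \<and> D0 \<inter> D1 = {} \<and> D0 \<inter> D2 = {} \<and> D1 \<inter> D2 = {})"

definition Vh :: "bool \<Rightarrow> nat \<Rightarrow> (nat \<Rightarrow> 'a) set" where
  "Vh periodic J = {f. periodic \<longrightarrow> f J = f 0}"

definition Vd0 :: "bool \<Rightarrow> nat \<Rightarrow> real set \<Rightarrow> (nat \<Rightarrow> vec) set" where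
  "Vd0 periodic J D0 = {X \<in> Vh periodic J. \<forall>p \<in> D0. inner (fun_of J X p) e1 = 0}"

definition Vd :: "bool \<Rightarrow> nat \<Rightarrow> real set \<Rightarrow> real set \<Rightarrow> real set \<Rightarrow> real set \<Rightarrow> (nat \<Rightarrow> vec) set" where
  "Vd periodic J DD D0 D1 D2 = {\<eta> \<in> Vd0 periodic J D0.
      (\<forall>p \<in> D1. inner (fun_of J \<eta> p) e1 = 0) \<and> (\<forall>p \<in> D2. inner (fun_of J \<eta> p) e2 = 0)
      \<and> (\<forall>p \<in> DD. fun_of J \<eta> p = 0)}"

definition Wd0 :: "bool \<Rightarrow> nat \<Rightarrow> real set \<Rightarrow> (nat \<Rightarrow> real) set" where
  "Wd0 periodic J D0 = {c \<in> Vh periodic J. \<forall>p \<in> D0. fun_of J c p = 0}"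

definition Wsharp :: "bool \<Rightarrow> bool \<Rightarrow> nat \<Rightarrow> real set \<Rightarrow> (nat \<Rightarrow> real) set" where
  "Wsharp lumped periodic J D0 = (if lumped then Wd0 periodic J D0 else Vh periodic J)"

definition x1 :: "nat \<Rightarrow> (nat \<Rightarrow> vec) \<Rightarrow> nat \<Rightarrow> real \<Rightarrow> real" where
  "x1 J X j \<rho> = inner (loc J X j \<rho>) e1"

definition absd :: "nat \<Rightarrow> (nat \<Rightarrow> vec) \<Rightarrow> nat \<Rightarrow> real \<Rightarrow> real" where
  "absd J X j \<rho> = norm (dloc J X j \<rho>)"

definition nu :: "nat \<Rightarrow> (nat \<Rightarrow> vec) \<Rightarrow> nat \<Rightarrow> real \<Rightarrow> vec" where
  "nu J X j \<rho> = - ((1 / norm (dloc J X j \<rho>)) *\<^sub>R perp (dloc J X j \<rho>))"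

definition assumptionA :: "nat \<Rightarrow> real set \<Rightarrow> (nat \<Rightarrow> vec) \<Rightarrow> bool" where
  "assumptionA J D0 X =
     ((\<forall>j \<in> {1..J}. \<forall>\<rho> \<in> {node J (j - 1) <..< node J j}. norm (dloc J X j \<rho>) > 0)
      \<and> (\<forall>\<rho> \<in> {0..1} - D0. inner (fun_of J X \<rho>) e1 > 0))"

text \<open>B^m(eta), with Xm = X^m and Xn = X^(m+1).\<close>
definition Bm :: "nat \<Rightarrow> (real \<Rightarrow> real) \<Rightarrow> real set \<Rightarrow> real set \<Rightarrow> (nat \<Rightarrow> vec) \<Rightarrow> (nat \<Rightarrow> vec)
      \<Rightarrow> (nat \<Rightarrow> vec) \<Rightarrow> real" where
  "Bm J rho D1 D2 Xm Xn \<eta> =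
     - (\<Sum>p \<in> D1. rho p * inner (fun_of J Xm p) e1 * inner (fun_of J \<eta> p) e2)
     - (\<Sum>p \<in> D2. inner (pos_part (rho p) *\<^sub>R fun_of J Xn p + neg_part (rho p) *\<^sub>R fun_of J Xm p) e1
                   * inner (fun_of J \<eta> p) e1)"

definition energy :: "nat \<Rightarrow> (real \<Rightarrow> real) \<Rightarrow> real set \<Rightarrow> real set \<Rightarrow> (nat \<Rightarrow> vec) \<Rightarrow> real" where
  "energy J rho D1 D2 X =
     2 * pi * ipE J (x1 J X) (absd J X)
     + 2 * pi * (\<Sum>p \<in> D1. rho p * inner (fun_of J X p) e1 * inner (fun_of J X p) e2)
     + pi * (\<Sum>p \<in> D2. rho p * (inner (fun_of J X p) e1)\<^sup>2)"

end

theory Submission imports Defs begin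

lemma node_diff: "J > 0 \<Longrightarrow> 1 \<le> j \<Longrightarrow> node J j - node J (j - 1) = 1 / real J"
  unfolding node_def by (simp add: of_nat_diff field_simps)

lemma node_le: assumes a: "J > 0" "1 \<le> j" shows "node J (j - 1) < node J j"
proof -
  have "1 / real J > 0" using a by simp
  then show ?thesis using node_diff[OF a] by linarith
qed

lemma node_range: "J > 0 \<Longrightarrow> j \<le> J \<Longrightarrow> node J j \<in> {0..1}"
  unfolding node_def by (simp add: field_simps)

lemma loc_add: "loc J (\<lambda>i. f i + g i) j \<rho> = loc J f j \<rho> + loc J g j \<rho>"
  unfolding loc_def by (simp add: algebra_simps)

lemma dloc_add: "dloc J (\<lambda>i. f i + g i) j \<rho> = dloc J f j \<rho> + dloc J g j \<rho>"
  unfolding dloc_def by (simp add: algebra_simps)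

lemma fun_of_add: "fun_of J (\<lambda>i. f i + g i) \<rho> = fun_of J f \<rho> + fun_of J g \<rho>"
  unfolding fun_of_def by (rule loc_add)

lemma fun_of_node:
  assumes "J > 0" "j \<le> J"
  shows "fun_of J f (node J j) = f j"
proof (cases "j = 0")
  case True
  then show ?thesis unfolding fun_of_def elem_def loc_def node_def by simp
next
  case False
  have "node J j > 0" using False assms unfolding node_def by simp
  moreover have "nat \<lceil>node J j * real J\<rceil> = j" using assms unfolding node_def by simp
  ultimately have e: "elem J (node J j) = j" unfolding elem_def using assms by simp
  have "(node J j - node J (j - 1)) * real J = 1" using node_diff[of J j] False assms by simp
  then show ?thesis unfolding fun_of_def e loc_def by simp
qed

lemma loc_conv: "loc J f j \<rho> = (1 - (\<rho> - node J (j - 1)) * real J) *\<^sub>R f (j - 1) + ((\<rho> - node J (j - 1)) * real J) *\<^sub>R f j"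
  unfolding loc_def by (simp add: algebra_simps)

lemma nodes_nonneg:
  assumes "Xm \<in> Vd0 periodic J D0" "assumptionA J D0 Xm" "J > 0" "j \<le> J"
  shows "inner (Xm j) e1 \<ge> 0"
proof (cases "node J j \<in> D0")
  case True
  then show ?thesis using assms fun_of_node[of J j Xm] unfolding Vd0_def by auto
next
  case False
  then show ?thesis using assms fun_of_node[of J j Xm] node_range[of J j] unfolding assumptionA_def
    by (metis DiffI less_imp_le)
qed

lemma x1_nonneg:
  assumes "\<And>i. i \<le> J \<Longrightarrow> inner (Xm i) e1 \<ge> 0" "J > 0" "1 \<le> j" "j \<le> J"
    "\<rho> \<in> {node J (j - 1) .. node J j}"
  shows "x1 J Xm j \<rho> \<ge> 0"
proof -
  define t where "t = (\<rho> - node J (j - 1)) * real J"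
  have t0: "t \<ge> 0" using assms unfolding t_def by auto
  have "t \<le> (node J j - node J (j - 1)) * real J" unfolding t_def using assms
    by (intro mult_right_mono) auto
  then have t1: "t \<le> 1" using node_diff[of J j] assms by simp
  have "x1 J Xm j \<rho> = (1 - t) * inner (Xm (j - 1)) e1 + t * inner (Xm j) e1"
    unfolding x1_def loc_conv t_def by (simp add: inner_add_left)
  moreover have "inner (Xm (j - 1)) e1 \<ge> 0" "inner (Xm j) e1 \<ge> 0" using assms by auto
  ultimately show ?thesis using t0 t1 by simp
qed

lemma dloc_const: "dloc J X j \<rho> = dloc J X j 0" unfolding dloc_def by simp

lemma absd_pos:
  assumes "assumptionA J D0 Xm" "J > 0" "1 \<le> j" "j \<le> J"
  shows "absd J Xm j \<rho> > 0"
proof -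
  define m where "m = (node J (j - 1) + node J j) / 2"
  have "m \<in> {node J (j - 1) <..< node J j}" using node_le[of J j] assms unfolding m_def by auto
  then have "norm (dloc J Xm j m) > 0" using assms unfolding assumptionA_def by auto
  then show ?thesis unfolding absd_def using dloc_const by metis
qed

lemma cont_loc[continuous_intros]: fixes X :: "nat \<Rightarrow> 'a::real_normed_vector" shows "continuous_on (S::real set) (\<lambda>\<rho>. loc J X j \<rho>)"
  unfolding loc_def by (intro continuous_intros)
lemma cont_dloc[continuous_intros]: fixes X :: "nat \<Rightarrow> 'a::real_normed_vector" shows "continuous_on (S::real set) (\<lambda>\<rho>. dloc J X j \<rho>)"
  unfolding dloc_def by (intro continuous_intros)
lemma cont_x1[continuous_intros]: "continuous_on S (\<lambda>\<rho>. x1 J X j \<rho>)"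
  unfolding x1_def by (intro continuous_intros)
lemma cont_absd[continuous_intros]: "continuous_on S (\<lambda>\<rho>. absd J X j \<rho>)"
  unfolding absd_def by (intro continuous_intros)
lemma cont_nu[continuous_intros]: "continuous_on S (\<lambda>\<rho>. nu J X j \<rho>)"
  unfolding nu_def dloc_def by simp


definition Qf :: "bool \<Rightarrow> nat \<Rightarrow> (nat \<Rightarrow> real \<Rightarrow> real) \<Rightarrow> real" where
  "Qf l J \<phi> = (if l then ((1 / real J) / 2) * (\<Sum>j = 1..J. \<phi> j (node J j) + \<phi> j (node J (j - 1)))
     else (\<Sum>j = 1..J. integral {node J (j - 1) .. node J j} (\<phi> j)))"

definition contQ :: "nat \<Rightarrow> (nat \<Rightarrow> real \<Rightarrow> real) \<Rightarrow> bool" where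
  "contQ J \<phi> = (\<forall>j \<in> {1..J}. continuous_on {node J (j - 1) .. node J j} (\<phi> j))"

lemma ipS_Qf: "ipS l J f g = Qf l J (\<lambda>j \<rho>. inner (f j \<rho>) (g j \<rho>))"
  unfolding ipS_def ipL_def ipE_def Qf_def by simp

lemma ipE_Qf: "ipE J f g = Qf False J (\<lambda>j \<rho>. inner (f j \<rho>) (g j \<rho>))"
  unfolding ipE_def Qf_def by simp

lemma Qf_cong:
  assumes "J > 0" "\<And>j \<rho>. 1 \<le> j \<Longrightarrow> j \<le> J \<Longrightarrow> \<rho> \<in> {node J (j - 1) .. node J j} \<Longrightarrow> \<phi> j \<rho> = \<psi> j \<rho>"
  shows "Qf l J \<phi> = Qf l J \<psi>"
proof -
  have n: "node J (j - 1) \<le> node J j" if "1 \<le> j" for j using node_le[OF assms(1) that] by simp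
  show ?thesis unfolding Qf_def
    using assms(2) n by (auto intro!: sum.cong integral_cong)
qed

lemma Qf_add:
  assumes "contQ J \<phi>" "contQ J \<psi>"
  shows "Qf l J (\<lambda>j \<rho>. \<phi> j \<rho> + \<psi> j \<rho>) = Qf l J \<phi> + Qf l J \<psi>"
proof (cases l)
  case True then show ?thesis unfolding Qf_def by (simp add: sum.distrib algebra_simps)
next
  case False
  have "integral {node J (j - 1) .. node J j} (\<lambda>\<rho>. \<phi> j \<rho> + \<psi> j \<rho>)
      = integral {node J (j - 1) .. node J j} (\<phi> j) + integral {node J (j - 1) .. node J j} (\<psi> j)"
    if "j \<in> {1..J}" for j
    using assms that unfolding contQ_def by (intro integral_add integrable_continuous_interval) auto
  then show ?thesis using False unfolding Qf_def by (simp add: sum.distrib)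
qed

lemma Qf_scale:
  assumes "contQ J \<phi>"
  shows "Qf l J (\<lambda>j \<rho>. c * \<phi> j \<rho>) = c * Qf l J \<phi>"
proof (cases l)
  case True then show ?thesis unfolding Qf_def by (simp add: sum_distrib_left algebra_simps)
next
  case False
  have "integral {node J (j - 1) .. node J j} (\<lambda>\<rho>. c * \<phi> j \<rho>)
      = c * integral {node J (j - 1) .. node J j} (\<phi> j)"
    if "j \<in> {1..J}" for j
    using assms that unfolding contQ_def by (intro integral_mult[symmetric] integrable_continuous_interval) auto
  then show ?thesis using False unfolding Qf_def by (simp add: sum_distrib_left)
qed

lemma Qf_nonneg:
  assumes "J > 0" "contQ J \<phi>" "\<And>j \<rho>. 1 \<le> j \<Longrightarrow> j \<le> J \<Longrightarrow> \<rho> \<in> {node J (j - 1) .. node J j} \<Longrightarrow> \<phi> j \<rho> \<ge> 0"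
  shows "Qf l J \<phi> \<ge> 0"
proof -
  have n: "node J (j - 1) \<le> node J j" if "1 \<le> j" for j using node_le[OF assms(1) that] by simp
  show ?thesis
  proof (cases l)
    case True
    have "(\<Sum>j = 1..J. \<phi> j (node J j) + \<phi> j (node J (j - 1))) \<ge> 0"
      using assms n by (auto intro!: sum_nonneg add_nonneg_nonneg)
    then show ?thesis unfolding Qf_def using True by simp
  next
    case False then show ?thesis unfolding Qf_def using assms n unfolding contQ_def
      by (auto intro!: sum_nonneg integral_nonneg integrable_continuous_interval)
  qed
qed

lemma Qf_le:
  assumes "J > 0" "contQ J \<phi>" "contQ J \<psi>"
    "\<And>j \<rho>. 1 \<le> j \<Longrightarrow> j \<le> J \<Longrightarrow> \<rho> \<in> {node J (j - 1) .. node J j} \<Longrightarrow> \<phi> j \<rho> \<le> \<psi> j \<rho>"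
  shows "Qf l J \<phi> \<le> Qf l J \<psi>"
proof -
  have c: "contQ J (\<lambda>j \<rho>. (-1) * \<phi> j \<rho>)" using assms(2) unfolding contQ_def
    by (auto intro!: continuous_intros)
  have c2: "contQ J (\<lambda>j \<rho>. \<psi> j \<rho> + (-1) * \<phi> j \<rho>)" using assms(2,3) unfolding contQ_def
    by (auto intro!: continuous_intros)
  have "0 \<le> Qf l J (\<lambda>j \<rho>. \<psi> j \<rho> + (-1) * \<phi> j \<rho>)"
    using Qf_nonneg[OF assms(1) c2] assms(4) by force
  also have "\<dots> = Qf l J \<psi> + Qf l J (\<lambda>j \<rho>. (-1) * \<phi> j \<rho>)" by (rule Qf_add[OF assms(3) c])
  also have "\<dots> = Qf l J \<psi> + (-1) * Qf l J \<phi>" by (simp only: Qf_scale[OF assms(2)])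
  finally show ?thesis by simp
qed

lemma trap:
  fixes a b \<alpha> \<beta> c :: real
  assumes "a \<le> b"
  shows "integral {a..b} (\<lambda>\<rho>. (\<alpha> + (\<rho> - a) * \<beta>) * c) = (b - a) / 2 * ((\<alpha> + (b - a) * \<beta>) * c + \<alpha> * c)"
proof -
  define F where "F = (\<lambda>\<rho>::real. (\<alpha> * \<rho> + (\<rho> - a)^2 * \<beta> / 2) * c)"
  have "((\<lambda>\<rho>. (\<alpha> + (\<rho> - a) * \<beta>) * c) has_integral (F b - F a)) {a..b}"
    apply (rule fundamental_theorem_of_calculus[OF assms])
    unfolding F_def has_real_derivative_iff_has_vector_derivative[symmetric]
    by (auto intro!: derivative_eq_intros simp: field_simps)
  then have i: "integral {a..b} (\<lambda>\<rho>. (\<alpha> + (\<rho> - a) * \<beta>) * c) = F b - F a" by (rule integral_unique)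
  show ?thesis unfolding i F_def by (simp add: power2_eq_square field_simps)
qed

lemma bulk_pw:
  fixes x d1 :: real and a b :: vec
  assumes "x \<ge> 0" "norm b > 0"
  shows "(x + d1) * norm a - x * norm b \<le> d1 * norm a + inner (x *\<^sub>R a) (inverse (norm b) *\<^sub>R (a - b))"
proof -
  have cs: "inner a b \<le> norm a * norm b" by (rule norm_cauchy_schwarz)
  have "norm a * norm b - norm b * norm b \<le> inner a a - inner a b"
  proof -
    have s: "0 \<le> (norm a - norm b)^2" by simp
    have "inner a a = norm a * norm a" by (simp add: power2_norm_eq_inner[symmetric] power2_eq_square)
    then show ?thesis using cs s by (simp add: power2_eq_square algebra_simps)
  qed
  then have "norm a - norm b \<le> (inner a a - inner a b) / norm b"
    using assms(2) by (simp add: field_simps)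
  then have "x * (norm a - norm b) \<le> x * ((inner a a - inner a b) / norm b)"
    using assms(1) by (rule mult_left_mono)
  then show ?thesis using assms(2) by (simp add: inner_diff_right divide_inverse algebra_simps)
qed

lemma bnd_pw:
  fixes r a d :: real
  shows "(r * a\<^sup>2 - r * (a + d)\<^sup>2) / 2 \<ge> - ((pos_part r * (a + d) + neg_part r * a) * d)"
proof (cases "r \<ge> 0")
  case True
  then have "pos_part r = r" "neg_part r = 0" unfolding pos_part_def neg_part_def by auto
  moreover have "(r * a\<^sup>2 - r * (a + d)\<^sup>2) / 2 + ((pos_part r * (a + d) + neg_part r * a) * d) = r * d\<^sup>2 / 2"
    using calculation by (simp add: power2_eq_square field_simps)
  moreover have "r * d\<^sup>2 / 2 \<ge> 0" using True by simp
  ultimately show ?thesis by linarith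
next
  case False
  then have "pos_part r = 0" "neg_part r = r" unfolding pos_part_def neg_part_def by auto
  moreover have "(r * a\<^sup>2 - r * (a + d)\<^sup>2) / 2 + ((pos_part r * (a + d) + neg_part r * a) * d) = - r * d\<^sup>2 / 2"
    using calculation by (simp add: power2_eq_square field_simps)
  moreover have "r * d\<^sup>2 \<le> 0" using False by (intro mult_nonpos_nonneg) auto
  then have "- r * d\<^sup>2 / 2 \<ge> 0" by simp
  ultimately show ?thesis by linarith
qed


lemma cs_quad:
  fixes S A L :: real
  assumes "\<And>t. S - 2 * t * A + t\<^sup>2 * L \<ge> 0"
  shows "S - A\<^sup>2 / L \<ge> 0"
proof (cases "L = 0")
  case True then show ?thesis using assms[of 0] by simp
next
  case False
  have "S - 2 * (A / L) * A + (A / L)\<^sup>2 * L = S - A\<^sup>2 / L"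
    using False by (simp add: power2_eq_square field_simps)
  then show ?thesis using assms[of "A / L"] by simp
qed

lemma trap_Qf:
  assumes "J > 0"
  shows "Qf True J (\<lambda>j \<rho>. x1 J Xm j \<rho> * absd J Xm j \<rho>) = Qf False J (\<lambda>j \<rho>. x1 J Xm j \<rho> * absd J Xm j \<rho>)"
proof -
  have "integral {node J (j - 1) .. node J j} (\<lambda>\<rho>. x1 J Xm j \<rho> * absd J Xm j \<rho>)
     = ((1 / real J) / 2) * (x1 J Xm j (node J j) * absd J Xm j (node J j)
          + x1 J Xm j (node J (j - 1)) * absd J Xm j (node J (j - 1)))" if j: "j \<in> {1..J}" for j
  proof -
    define n0 where "n0 = node J (j - 1)"
    define n1 where "n1 = node J j"
    define \<alpha> where "\<alpha> = inner (Xm (j - 1)) e1"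
    define \<beta> where "\<beta> = real J * inner (Xm j - Xm (j - 1)) e1"
    define c where "c = norm (dloc J Xm j 0)"
    have d: "n1 - n0 = 1 / real J" unfolding n0_def n1_def using node_diff[of J j] assms j by simp
    have w: "x1 J Xm j \<rho> * absd J Xm j \<rho> = (\<alpha> + (\<rho> - n0) * \<beta>) * c" for \<rho>
      unfolding x1_def loc_def absd_def \<alpha>_def \<beta>_def c_def n0_def
      by (subst dloc_const) (simp add: inner_add_left algebra_simps)
    have "1 / real J > 0" using assms by simp
    then have le: "n0 \<le> n1" using d by linarith
    have "integral {n0..n1} (\<lambda>\<rho>. x1 J Xm j \<rho> * absd J Xm j \<rho>) = integral {n0..n1} (\<lambda>\<rho>. (\<alpha> + (\<rho> - n0) * \<beta>) * c)"
      using w by simp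
    also have "\<dots> = (n1 - n0) / 2 * ((\<alpha> + (n1 - n0) * \<beta>) * c + \<alpha> * c)" by (rule trap[OF le])
    also have "\<dots> = ((1 / real J) / 2) * ((\<alpha> + (n1 - n0) * \<beta>) * c + (\<alpha> + (n0 - n0) * \<beta>) * c)"
      using d by simp
    finally show ?thesis using w[of n1] w[of n0] unfolding n0_def n1_def by simp
  qed
  then show ?thesis unfolding Qf_def by (simp add: sum_distrib_left)
qed


theorem mainTheorem11:
  fixes lumped periodic :: bool and J :: nat and DD D0 D1 D2 :: "real set"
    and rho :: "real \<Rightarrow> real" and Xm dX :: "nat \<Rightarrow> vec" and kappa :: "nat \<Rightarrow> real" and dt :: real
  assumes "J \<ge> 3"
    and "boundary_partition periodic DD D0 D1 D2"
    and "\<forall>p \<in> {0, 1}. \<bar>rho p\<bar> \<le> 1"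
    and "Xm \<in> Vd0 periodic J D0"
    and "assumptionA J D0 Xm"
    and "dt > 0"
    and "dX \<in> Vd periodic J DD D0 D1 D2"
    and "kappa \<in> Wsharp lumped periodic J D0"
    and "\<forall>c \<in> Wsharp lumped periodic J D0.
           ipS lumped J (\<lambda>j \<rho>. x1 J Xm j \<rho> *\<^sub>R ((1 / dt) *\<^sub>R (loc J (\<lambda>i. Xm i + dX i) j \<rho> - loc J Xm j \<rho>)))
                        (\<lambda>j \<rho>. (loc J c j \<rho> * absd J Xm j \<rho>) *\<^sub>R nu J Xm j \<rho>)
         = ipS lumped J (\<lambda>j \<rho>. x1 J Xm j \<rho> * loc J kappa j \<rho>) (\<lambda>j \<rho>. loc J c j \<rho> * absd J Xm j \<rho>)
           - ipS lumped J (x1 J Xm) (\<lambda>j \<rho>. loc J kappa j \<rho> * absd J Xm j \<rho>) / ipE J (x1 J Xm) (absd J Xm)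
             * ipS lumped J (x1 J Xm) (\<lambda>j \<rho>. loc J c j \<rho> * absd J Xm j \<rho>)"
    and "\<forall>\<eta> \<in> Vd periodic J DD D0 D1 D2.
           ipS lumped J (\<lambda>j \<rho>. (x1 J Xm j \<rho> * loc J kappa j \<rho>) *\<^sub>R nu J Xm j \<rho>)
                        (\<lambda>j \<rho>. absd J Xm j \<rho> *\<^sub>R loc J \<eta> j \<rho>)
           + ipE J (\<lambda>j \<rho>. inner (loc J \<eta> j \<rho>) e1) (absd J (\<lambda>i. Xm i + dX i))
           + ipE J (\<lambda>j \<rho>. x1 J Xm j \<rho> *\<^sub>R dloc J (\<lambda>i. Xm i + dX i) j \<rho>)
                   (\<lambda>j \<rho>. inverse (absd J Xm j \<rho>) *\<^sub>R dloc J \<eta> j \<rho>)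
         = Bm J rho D1 D2 Xm (\<lambda>i. Xm i + dX i) \<eta>"
  shows "(energy J rho D1 D2 Xm - energy J rho D1 D2 (\<lambda>i. Xm i + dX i)) / (2 * pi)
           \<ge> dt * (ipS lumped J (\<lambda>j \<rho>. x1 J Xm j \<rho> * (loc J kappa j \<rho>)\<^sup>2) (absd J Xm)
                   - (ipS lumped J (x1 J Xm) (\<lambda>j \<rho>. loc J kappa j \<rho> * absd J Xm j \<rho>))\<^sup>2
                     / ipE J (x1 J Xm) (absd J Xm))
         \<and> dt * (ipS lumped J (\<lambda>j \<rho>. x1 J Xm j \<rho> * (loc J kappa j \<rho>)\<^sup>2) (absd J Xm)
                   - (ipS lumped J (x1 J Xm) (\<lambda>j \<rho>. loc J kappa j \<rho> * absd J Xm j \<rho>))\<^sup>2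
                     / ipE J (x1 J Xm) (absd J Xm)) \<ge> 0"
proof -
  have J0: "J > 0" using assms(1) by simp
  have nn: "\<And>i. i \<le> J \<Longrightarrow> inner (Xm i) e1 \<ge> 0" using nodes_nonneg[OF assms(4) assms(5) J0] by blast
  have x1nn: "x1 J Xm j \<rho> \<ge> 0" if "1 \<le> j" "j \<le> J" "\<rho> \<in> {node J (j - 1) .. node J j}" for j \<rho>
    by (rule x1_nonneg[where Xm=Xm]) (use nn J0 that in auto)
  have ap: "absd J Xm j \<rho> > 0" if "1 \<le> j" "j \<le> J" for j \<rho>
    using absd_pos[OF assms(5) J0 that] .
  define Xn where "Xn = (\<lambda>i. Xm i + dX i)"
  define w where "w = (\<lambda>j \<rho>. x1 J Xm j \<rho> * absd J Xm j \<rho>)"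
  define k where "k = (\<lambda>j \<rho>. loc J kappa j \<rho>)"
  define S where "S = ipS lumped J (\<lambda>j \<rho>. x1 J Xm j \<rho> * (loc J kappa j \<rho>)\<^sup>2) (absd J Xm)"
  define A where "A = ipS lumped J (x1 J Xm) (\<lambda>j \<rho>. loc J kappa j \<rho> * absd J Xm j \<rho>)"
  define L where "L = ipE J (x1 J Xm) (absd J Xm)"
  have cw: "contQ J w" unfolding contQ_def w_def by (auto intro!: continuous_intros)
  have cwk: "contQ J (\<lambda>j \<rho>. w j \<rho> * k j \<rho>)" unfolding contQ_def w_def k_def by (auto intro!: continuous_intros)
  have cwk2: "contQ J (\<lambda>j \<rho>. w j \<rho> * (k j \<rho>)\<^sup>2)" unfolding contQ_def w_def k_def by (auto intro!: continuous_intros)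
  have SQ: "S = Qf lumped J (\<lambda>j \<rho>. w j \<rho> * (k j \<rho>)\<^sup>2)"
    unfolding S_def ipS_Qf w_def k_def by (simp add: algebra_simps)
  have AQ: "A = Qf lumped J (\<lambda>j \<rho>. w j \<rho> * k j \<rho>)"
    unfolding A_def ipS_Qf w_def k_def by (simp add: algebra_simps)
  have LQ: "L = Qf lumped J w"
  proof (cases lumped)
    case True then show ?thesis unfolding L_def ipE_Qf w_def using trap_Qf[OF J0] by simp
  next
    case False then show ?thesis unfolding L_def ipE_Qf w_def by simp
  qed
  have quad: "S - 2 * t * A + t\<^sup>2 * L \<ge> 0" for t
  proof -
    have "0 \<le> Qf lumped J (\<lambda>j \<rho>. w j \<rho> * (k j \<rho> - t)\<^sup>2)"
      using J0 by (intro Qf_nonneg) (auto simp: contQ_def w_def k_def intro!: continuous_intros mult_nonneg_nonneg x1nn less_imp_le[OF ap])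
    also have "\<dots> = Qf lumped J (\<lambda>j \<rho>. (w j \<rho> * (k j \<rho>)\<^sup>2 + (- 2 * t) * (w j \<rho> * k j \<rho>)) + t\<^sup>2 * w j \<rho>)"
      by (intro Qf_cong[OF J0]) (simp add: power2_eq_square algebra_simps)
    also have "\<dots> = Qf lumped J (\<lambda>j \<rho>. w j \<rho> * (k j \<rho>)\<^sup>2 + (- 2 * t) * (w j \<rho> * k j \<rho>)) + Qf lumped J (\<lambda>j \<rho>. t\<^sup>2 * w j \<rho>)"
      by (rule Qf_add) (auto simp: contQ_def w_def k_def intro!: continuous_intros)
    also have "\<dots> = S - 2 * t * A + t\<^sup>2 * L"
    proof -
      have cb: "contQ J (\<lambda>j \<rho>. (- 2 * t) * (w j \<rho> * k j \<rho>))"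
        unfolding contQ_def w_def k_def by (auto intro!: continuous_intros)
      show ?thesis
        unfolding Qf_add[OF cwk2 cb] Qf_scale[OF cwk] Qf_scale[OF cw] SQ AQ LQ by simp
    qed
    finally show ?thesis .
  qed
  have conj2: "S - A\<^sup>2 / L \<ge> 0" using cs_quad[OF quad] .
  have c2: "0 \<le> dt * (S - A\<^sup>2 / L)" using conj2 assms(6) by simp
  define \<phi>1 where "\<phi>1 = (\<lambda>j \<rho>. inner (x1 J Xm j \<rho> *\<^sub>R ((1 / dt) *\<^sub>R (loc J Xn j \<rho> - loc J Xm j \<rho>)))
        ((loc J kappa j \<rho> * absd J Xm j \<rho>) *\<^sub>R nu J Xm j \<rho>))"
  define P1 where "P1 = ipS lumped J (\<lambda>j \<rho>. x1 J Xm j \<rho> *\<^sub>R ((1 / dt) *\<^sub>R (loc J Xn j \<rho> - loc J Xm j \<rho>)))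
        (\<lambda>j \<rho>. (loc J kappa j \<rho> * absd J Xm j \<rho>) *\<^sub>R nu J Xm j \<rho>)"
  define P2 where "P2 = ipS lumped J (\<lambda>j \<rho>. (x1 J Xm j \<rho> * loc J kappa j \<rho>) *\<^sub>R nu J Xm j \<rho>)
                        (\<lambda>j \<rho>. absd J Xm j \<rho> *\<^sub>R loc J dX j \<rho>)"
  define T1 where "T1 = ipE J (\<lambda>j \<rho>. inner (loc J dX j \<rho>) e1) (absd J Xn)"
  define T2 where "T2 = ipE J (\<lambda>j \<rho>. x1 J Xm j \<rho> *\<^sub>R dloc J Xn j \<rho>)
                   (\<lambda>j \<rho>. inverse (absd J Xm j \<rho>) *\<^sub>R dloc J dX j \<rho>)"
  have S1: "ipS lumped J (\<lambda>j \<rho>. x1 J Xm j \<rho> * loc J kappa j \<rho>) (\<lambda>j \<rho>. loc J kappa j \<rho> * absd J Xm j \<rho>) = S"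
    unfolding S_def ipS_Qf by (simp add: power2_eq_square algebra_simps)
  have eq1: "P1 = S - A / L * A"
    using assms(9) assms(8) unfolding P1_def Xn_def S1[symmetric] A_def L_def by auto
  have cphi: "contQ J \<phi>1" using assms(6) unfolding contQ_def \<phi>1_def by (auto intro!: continuous_intros)
  have "P2 = Qf lumped J (\<lambda>j \<rho>. dt * \<phi>1 j \<rho>)"
    unfolding P2_def ipS_Qf \<phi>1_def Xn_def
  proof (intro Qf_cong[OF J0])
    fix j \<rho>
    have "dt \<noteq> 0" using assms(6) by simp
    then show "inner ((x1 J Xm j \<rho> * loc J kappa j \<rho>) *\<^sub>R nu J Xm j \<rho>) (absd J Xm j \<rho> *\<^sub>R loc J dX j \<rho>) =
      dt * inner (x1 J Xm j \<rho> *\<^sub>R ((1 / dt) *\<^sub>R (loc J (\<lambda>i. Xm i + dX i) j \<rho> - loc J Xm j \<rho>)))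
        ((loc J kappa j \<rho> * absd J Xm j \<rho>) *\<^sub>R nu J Xm j \<rho>)"
      by (simp add: loc_add inner_commute)
  qed
  also have "\<dots> = dt * Qf lumped J \<phi>1" by (rule Qf_scale[OF cphi])
  also have "\<dots> = dt * P1" unfolding P1_def ipS_Qf \<phi>1_def ..
  finally have P21: "P2 = dt * (S - A\<^sup>2 / L)" using eq1 by (simp add: power2_eq_square)
  have eq2: "P2 + T1 + T2 = Bm J rho D1 D2 Xm Xn dX"
    using assms(10) assms(7) unfolding P2_def T1_def T2_def Xn_def by auto
  have bulk: "ipE J (x1 J Xn) (absd J Xn) \<le> L + T1 + T2"
  proof -
    define \<psi>m where "\<psi>m = (\<lambda>j \<rho>. inner (x1 J Xm j \<rho>) (absd J Xm j \<rho>))"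
    define \<psi>1 where "\<psi>1 = (\<lambda>j \<rho>. inner (inner (loc J dX j \<rho>) e1) (absd J Xn j \<rho>))"
    define \<psi>2 where "\<psi>2 = (\<lambda>j \<rho>. inner (x1 J Xm j \<rho> *\<^sub>R dloc J Xn j \<rho>)
                   (inverse (absd J Xm j \<rho>) *\<^sub>R dloc J dX j \<rho>))"
    have cm: "contQ J \<psi>m" unfolding contQ_def \<psi>m_def by (auto intro!: continuous_intros)
    have c1: "contQ J \<psi>1" unfolding contQ_def \<psi>1_def by (auto intro!: continuous_intros)
    have c2': "contQ J \<psi>2" unfolding contQ_def \<psi>2_def absd_def dloc_def by (auto intro!: continuous_intros)
    have cm1: "contQ J (\<lambda>j \<rho>. \<psi>m j \<rho> + \<psi>1 j \<rho>)" using cm c1 unfolding contQ_def by (auto intro!: continuous_intros)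
    have cn: "contQ J (\<lambda>j \<rho>. inner (x1 J Xn j \<rho>) (absd J Xn j \<rho>))" unfolding contQ_def by (auto intro!: continuous_intros)
    have c3: "contQ J (\<lambda>j \<rho>. (\<psi>m j \<rho> + \<psi>1 j \<rho>) + \<psi>2 j \<rho>)" using cm c1 c2' unfolding contQ_def by (auto intro!: continuous_intros)
    have "ipE J (x1 J Xn) (absd J Xn) \<le> Qf False J (\<lambda>j \<rho>. (\<psi>m j \<rho> + \<psi>1 j \<rho>) + \<psi>2 j \<rho>)"
      unfolding ipE_Qf
    proof (rule Qf_le[OF J0 cn c3])
      fix j \<rho> assume j: "1 \<le> j" "j \<le> J" "\<rho> \<in> {node J (j - 1) .. node J j}"
      have x: "x1 J Xn j \<rho> = x1 J Xm j \<rho> + inner (loc J dX j \<rho>) e1"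
        unfolding x1_def Xn_def loc_add by (simp add: inner_add_left)
      have dd: "dloc J dX j \<rho> = dloc J Xn j \<rho> - dloc J Xm j \<rho>"
        unfolding Xn_def dloc_add by simp
      have b: "norm (dloc J Xm j \<rho>) > 0" using ap[OF j(1,2)] unfolding absd_def .
      show "inner (x1 J Xn j \<rho>) (absd J Xn j \<rho>) \<le> \<psi>m j \<rho> + \<psi>1 j \<rho> + \<psi>2 j \<rho>"
        using bulk_pw[OF x1nn[OF j] b, of "inner (loc J dX j \<rho>) e1" "dloc J Xn j \<rho>"]
        unfolding \<psi>m_def \<psi>1_def \<psi>2_def x dd absd_def by simp
    qed
    also have "\<dots> = Qf False J (\<lambda>j \<rho>. \<psi>m j \<rho> + \<psi>1 j \<rho>) + Qf False J \<psi>2" by (rule Qf_add[OF cm1 c2'])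
    also have "\<dots> = Qf False J \<psi>m + Qf False J \<psi>1 + Qf False J \<psi>2" by (simp only: Qf_add[OF cm c1])
    also have "\<dots> = L + T1 + T2"
      unfolding L_def T1_def T2_def ipE_Qf \<psi>m_def \<psi>1_def \<psi>2_def ..
    finally show ?thesis .
  qed
  define F1 where "F1 = (\<lambda>X p. rho p * inner (fun_of J X p) e1 * inner (fun_of J X p) e2)"
  define F2 where "F2 = (\<lambda>X p. rho p * (inner (fun_of J X p) e1)\<^sup>2)"
  have En: "(energy J rho D1 D2 Xm - energy J rho D1 D2 Xn) / (2 * pi)
      = L - ipE J (x1 J Xn) (absd J Xn) + (\<Sum>p\<in>D1. F1 Xm p - F1 Xn p) + (\<Sum>p\<in>D2. (F2 Xm p - F2 Xn p) / 2)"
    unfolding energy_def L_def F1_def F2_def sum_subtractf sum_divide_distrib[symmetric]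
    by (simp add: field_simps)
  have fn: "fun_of J Xn p = fun_of J Xm p + fun_of J dX p" for p unfolding Xn_def fun_of_add ..
  have dXv: "\<forall>p\<in>D1. inner (fun_of J dX p) e1 = 0" using assms(7) unfolding Vd_def by auto
  have bd1: "(\<Sum>p\<in>D1. F1 Xm p - F1 Xn p) = - (\<Sum>p \<in> D1. rho p * inner (fun_of J Xm p) e1 * inner (fun_of J dX p) e2)"
    unfolding sum_negf[symmetric]
    by (rule sum.cong) (use dXv in \<open>auto simp: F1_def fn inner_add_left algebra_simps\<close>)
  have bd2: "(\<Sum>p\<in>D2. (F2 Xm p - F2 Xn p) / 2) \<ge> - (\<Sum>p\<in>D2. inner (pos_part (rho p) *\<^sub>R fun_of J Xn p + neg_part (rho p) *\<^sub>R fun_of J Xm p) e1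
                   * inner (fun_of J dX p) e1)"
    unfolding sum_negf[symmetric]
  proof (rule sum_mono)
    fix p
    show "- (inner (pos_part (rho p) *\<^sub>R fun_of J Xn p + neg_part (rho p) *\<^sub>R fun_of J Xm p) e1 * inner (fun_of J dX p) e1)
        \<le> (F2 Xm p - F2 Xn p) / 2"
      using bnd_pw[of "rho p" "inner (fun_of J Xm p) e1" "inner (fun_of J dX p) e1"]
      unfolding F2_def fn by (simp add: inner_add_left algebra_simps)
  qed
  have Bb: "Bm J rho D1 D2 Xm Xn dX \<le> (\<Sum>p\<in>D1. F1 Xm p - F1 Xn p) + (\<Sum>p\<in>D2. (F2 Xm p - F2 Xn p) / 2)"
    unfolding Bm_def bd1 using bd2 by linarith
  have c1: "(energy J rho D1 D2 Xm - energy J rho D1 D2 Xn) / (2 * pi) \<ge> dt * (S - A\<^sup>2 / L)"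
    unfolding En using Bb bulk eq2 P21 by linarith
  show ?thesis using c1 c2 unfolding Xn_def S_def A_def L_def by simp
qed

end
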